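(* Let $\mathcal I$ index a finite set of strategies for the iterated Prisoner's Dilemma. Suppose the strategy indexed by $i^*\in\mathcal I$ is a strictly firm memory-one vector $\mathbf p^{i^*}$ with initial play $d$. If for no other $j\in\mathcal I$ is the strategy vector $\mathbf p^j$ firm, then $i^*$ is an ESS for the game $\{A_{ij}:i,j\in\mathcal I\}$.
   Context: Iterated Prisoner's Dilemma with normalized payoffs $T=1>R>P>S=0$, $2R>1$; outcomes ordered $cc,cd,dc,dd$ (own play first); payoff vectors $\mathbf S_X=(R,0,1,P)$, $\mathbf S_Y=(R,1,0,P)$. A memory-one strategy vector is $\mathbf p\in[0,1]^4$, $p_k$ the probability of playing $c$ after the $k$-th outcome, outcomes labeled from the player's own perspective; it is firm if $p_4=0$. A strategy is such a vector together with an initial play. For a strategy pattern of the opponent Y (any possibly random, history-dependent rule), a limit distribution is a limit point $\mathbf v$ of the Cesàro averages of the round-$n$ outcome distributions, with $s_X=\langle\mathbf v\cdot\mathbf S_X\rangle$, $s_Y=\langle\mathbf v\cdot\mathbf S_Y\rangle$. A memory-one $\mathbf p$ for X is strictly firm if it is firm and for every strategy pattern of Y and every associated limit distribution, $s_Y\ge P$ implies $v_4=1$. $A_{ij}$ is the long-run (Cesàro-limit) average payoff of X when X uses strategy $i$ and Y uses strategy $j$. $i^*$ is an ESS if $A_{ji^*}<A_{i^*i^*}$ for all $j\ne i^*$. *)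

theory Defs
  imports Complex_Main
begin

text \<open>Outcomes of one round, from X's perspective (own play first):
  CC = cc, CD = cd, DC = dc, DD = dd.\<close>
datatype outcome = CC | CD | DC | DD

definition outcomes :: "outcome set" where
  "outcomes = {CC, CD, DC, DD}"

fun swap :: "outcome \<Rightarrow> outcome" where
  "swap CC = CC" | "swap CD = DC" | "swap DC = CD" | "swap DD = DD"

fun xc :: "outcome \<Rightarrow> bool" where
  "xc CC = True" | "xc CD = True" | "xc DC = False" | "xc DD = False"

fun yc :: "outcome \<Rightarrow> bool" where
  "yc CC = True" | "yc CD = False" | "yc DC = True" | "yc DD = False"

text \<open>Payoff vectors S_X = (R,0,1,P), S_Y = (R,1,0,P) (T = 1, S = 0).\<close>
fun SX :: "real \<Rightarrow> real \<Rightarrow> outcome \<Rightarrow> real" where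
  "SX R P CC = R" | "SX R P CD = 0" | "SX R P DC = 1" | "SX R P DD = P"

fun SY :: "real \<Rightarrow> real \<Rightarrow> outcome \<Rightarrow> real" where
  "SY R P CC = R" | "SY R P CD = 1" | "SY R P DC = 0" | "SY R P DD = P"

definition choice_prob :: "real \<Rightarrow> bool \<Rightarrow> real" where
  "choice_prob pc b = (if b then pc else 1 - pc)"

text \<open>A memory-one strategy vector: p k is the probability of playing c after
  outcome k (from the player's own perspective), with p in [0,1]^4.\<close>
definition memory_one :: "(outcome \<Rightarrow> real) \<Rightarrow> bool" where
  "memory_one p \<longleftrightarrow> (\<forall>k. 0 \<le> p k \<and> p k \<le> 1)"

definition firm :: "(outcome \<Rightarrow> real) \<Rightarrow> bool" where
  "firm p \<longleftrightarrow> p DD = 0"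

text \<open>A strategy pattern of Y: a (behavioural) possibly random,
  history-dependent rule, giving for each history (list of past outcomes
  from X's perspective, most recent first) the probability that Y plays c.\<close>
definition pattern :: "(outcome list \<Rightarrow> real) \<Rightarrow> bool" where
  "pattern q \<longleftrightarrow> (\<forall>h. 0 \<le> q h \<and> q h \<le> 1)"

text \<open>Probability of a history (most recent outcome first) when X uses the
  memory-one vector p with initial play x0 (True = c) and Y uses pattern q.\<close>
fun hist_prob :: "(outcome \<Rightarrow> real) \<Rightarrow> bool \<Rightarrow> (outcome list \<Rightarrow> real)
    \<Rightarrow> outcome list \<Rightarrow> real" where
  "hist_prob p x0 q [] = 1"
| "hist_prob p x0 q (k # h) =
     hist_prob p x0 q h
     * choice_prob (if h = [] then (if x0 then 1 else 0) else p (hd h)) (xc k)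
     * choice_prob (q h) (yc k)"

text \<open>Distribution of the outcome of round n (rounds numbered from 0).\<close>
definition round_dist :: "(outcome \<Rightarrow> real) \<Rightarrow> bool \<Rightarrow> (outcome list \<Rightarrow> real)
    \<Rightarrow> nat \<Rightarrow> outcome \<Rightarrow> real" where
  "round_dist p x0 q n k =
     (\<Sum>h\<in>{h. set h \<subseteq> outcomes \<and> length h = Suc n \<and> hd h = k}. hist_prob p x0 q h)"

definition cesaro :: "(outcome \<Rightarrow> real) \<Rightarrow> bool \<Rightarrow> (outcome list \<Rightarrow> real)
    \<Rightarrow> nat \<Rightarrow> outcome \<Rightarrow> real" where
  "cesaro p x0 q N k = (\<Sum>n<N. round_dist p x0 q n k) / real N"

definition limit_dist :: "(outcome \<Rightarrow> real) \<Rightarrow> bool \<Rightarrow> (outcome list \<Rightarrow> real)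
    \<Rightarrow> (outcome \<Rightarrow> real) \<Rightarrow> bool" where
  "limit_dist p x0 q v \<longleftrightarrow>
     (\<exists>r. strict_mono r \<and> (\<forall>k. (\<lambda>N. cesaro p x0 q (r N) k) \<longlonglongrightarrow> v k))"

definition dot :: "(outcome \<Rightarrow> real) \<Rightarrow> (outcome \<Rightarrow> real) \<Rightarrow> real" where
  "dot v S = (\<Sum>k\<in>outcomes. v k * S k)"

definition strictly_firm :: "real \<Rightarrow> real \<Rightarrow> (outcome \<Rightarrow> real) \<Rightarrow> bool" where
  "strictly_firm R P p \<longleftrightarrow> firm p \<and>
     (\<forall>x0 q v. pattern q \<longrightarrow> limit_dist p x0 q v \<longrightarrow>
        dot v (SY R P) \<ge> P \<longrightarrow> v DD = 1)"

text \<open>Strategy pattern induced by a memory-one strategy (vector, initial play)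
  used by Y: Y sees outcomes from its own perspective.\<close>
definition mem1_pattern :: "(outcome \<Rightarrow> real) \<Rightarrow> bool \<Rightarrow> outcome list \<Rightarrow> real" where
  "mem1_pattern p y0 h = (if h = [] then (if y0 then 1 else 0) else p (swap (hd h)))"

definition payoffA :: "real \<Rightarrow> real \<Rightarrow> (outcome \<Rightarrow> real) \<times> bool
    \<Rightarrow> (outcome \<Rightarrow> real) \<times> bool \<Rightarrow> real" where
  "payoffA R P si sj =
     lim (\<lambda>N. dot (cesaro (fst si) (snd si) (mem1_pattern (fst sj) (snd sj)) N) (SX R P))"

definition ESS :: "'i set \<Rightarrow> ('i \<Rightarrow> 'i \<Rightarrow> real) \<Rightarrow> 'i \<Rightarrow> bool" where
  "ESS I A istar \<longleftrightarrow> (\<forall>j\<in>I. j \<noteq> istar \<longrightarrow> A j istar < A istar istar)"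

end

theory Submission
  imports Defs "HOL-Analysis.Analysis" "HOL-Library.Infinite_Set"
begin


fun mpow :: "real^'n::finite^'n \<Rightarrow> nat \<Rightarrow> real^'n^'n" where
  "mpow M 0 = mat 1" | "mpow M (Suc n) = mpow M n ** M"

definition avg :: "real^'n::finite^'n \<Rightarrow> nat \<Rightarrow> real^'n^'n" where
  "avg M N = (1 / real N) *\<^sub>R (\<Sum>n<N. mpow M n)"

definition stoch :: "real^'n::finite^'n \<Rightarrow> bool" where
  "stoch M \<longleftrightarrow> (\<forall>i j. 0 \<le> M$i$j) \<and> (\<forall>i. (\<Sum>j\<in>UNIV. M$i$j) = 1)"

lemma mm_nth: "(A ** B) $ i $ j = (\<Sum>k\<in>UNIV. A$i$k * B$k$j)"
  by (simp add: matrix_matrix_mult_def)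

lemma mm_add_rdistrib: "(A + B) ** (C::real^'n::finite^'n) = A ** C + B ** C"
  by (simp add: vec_eq_iff mm_nth distrib_right sum.distrib)

lemma mm_diff_rdistrib: "(A - B) ** (C::real^'n::finite^'n) = A ** C - B ** C"
  by (simp add: vec_eq_iff mm_nth left_diff_distrib sum_subtractf)

lemma mm_diff_ldistrib: "C ** (A - B) = C ** A - (C::real^'n::finite^'n) ** B"
  by (simp add: vec_eq_iff mm_nth right_diff_distrib sum_subtractf)

lemma mm_scaleR_left: "(c *\<^sub>R A) ** (B::real^'n::finite^'n) = c *\<^sub>R (A ** B)"
  by (simp add: vec_eq_iff mm_nth sum_distrib_left mult.assoc)

lemma mm_scaleR_right: "B ** (c *\<^sub>R A) = c *\<^sub>R ((B::real^'n::finite^'n) ** A)"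
  by (simp add: vec_eq_iff mm_nth sum_distrib_left mult.left_commute)

lemma mm_sum_left: "(\<Sum>n<(N::nat). f n) ** (B::real^'n::finite^'n) = (\<Sum>n<N. f n ** B)"
  by (induction N) (simp_all add: mm_add_rdistrib)

lemma mm_sum_right: "(B::real^'n::finite^'n) ** (\<Sum>n<(N::nat). f n) = (\<Sum>n<N. B ** f n)"
  by (induction N) (simp_all add: matrix_add_ldistrib)

lemma stoch_mult: "stoch A \<Longrightarrow> stoch B \<Longrightarrow> stoch (A ** B)"
  unfolding stoch_def
proof (intro conjI allI)
  fix i j assume "(\<forall>i j. 0 \<le> A $ i $ j) \<and> (\<forall>i. (\<Sum>j\<in>UNIV. A $ i $ j) = 1)"
    "(\<forall>i j. 0 \<le> B $ i $ j) \<and> (\<forall>i. (\<Sum>j\<in>UNIV. B $ i $ j) = 1)"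
  then show "0 \<le> (A ** B) $ i $ j" by (auto simp: mm_nth intro: sum_nonneg)
next
  fix i assume a: "(\<forall>i j. 0 \<le> A $ i $ j) \<and> (\<forall>i. (\<Sum>j\<in>UNIV. A $ i $ j) = 1)"
    "(\<forall>i j. 0 \<le> B $ i $ j) \<and> (\<forall>i. (\<Sum>j\<in>UNIV. B $ i $ j) = 1)"
  have "(\<Sum>j\<in>UNIV. (A ** B) $ i $ j) = (\<Sum>k\<in>UNIV. \<Sum>j\<in>UNIV. A$i$k * B$k$j)"
    by (simp add: mm_nth) (rule sum.swap)
  also have "\<dots> = (\<Sum>k\<in>UNIV. A$i$k)" using a by (simp add: sum_distrib_left[symmetric])
  finally show "(\<Sum>j\<in>UNIV. (A ** B) $ i $ j) = 1" using a by simp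
qed

lemma stoch_mat1: "stoch (mat 1 :: real^'n::finite^'n)"
  by (simp add: stoch_def mat_def)

lemma stoch_mpow: "stoch M \<Longrightarrow> stoch (mpow M n)"
  by (induction n) (simp_all add: stoch_mat1 stoch_mult)

lemma stoch_entry: assumes "stoch A" shows "0 \<le> A$i$j \<and> A$i$j \<le> 1"
proof -
  have "A$i$j \<le> (\<Sum>j\<in>UNIV. A$i$j)"
    by (rule member_le_sum) (use assms in \<open>auto simp: stoch_def\<close>)
  then show ?thesis using assms by (auto simp: stoch_def)
qed

lemma norm_entry_bound:
  fixes A :: "real^'n::finite^'n"
  assumes "\<And>i j. \<bar>A$i$j\<bar> \<le> 1"
  shows "norm A \<le> real CARD('n) * real CARD('n)"
proof -
  have "norm A \<le> (\<Sum>i\<in>UNIV. norm (A$i))"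
    unfolding norm_vec_def by (rule L2_set_le_sum) simp
  also have "\<dots> \<le> (\<Sum>i\<in>(UNIV::'n set). real CARD('n))"
  proof (rule sum_mono)
    fix i
    have "norm (A$i) \<le> (\<Sum>j\<in>UNIV. \<bar>A$i$j\<bar>)" by (rule norm_le_l1_cart)
    also have "\<dots> \<le> (\<Sum>j\<in>(UNIV::'n set). 1)" by (rule sum_mono) (use assms in auto)
    finally show "norm (A$i) \<le> real CARD('n)" by simp
  qed
  finally show ?thesis by simp
qed

lemma avg_entry: assumes "stoch M" shows "\<bar>avg M N $ i $ j\<bar> \<le> 1"
proof (cases "N = 0")
  case True then show ?thesis by (simp add: avg_def)
next
  case False
  have "avg M N $ i $ j = (\<Sum>n<N. mpow M n $ i $ j) / real N"
    by (simp add: avg_def)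
  moreover have "0 \<le> (\<Sum>n<N. mpow M n $ i $ j)"
    using stoch_entry[OF stoch_mpow[OF assms]] by (intro sum_nonneg) auto
  moreover have "(\<Sum>n<N. mpow M n $ i $ j) \<le> (\<Sum>n<N. 1)"
    using stoch_entry[OF stoch_mpow[OF assms]] by (intro sum_mono) auto
  ultimately show ?thesis using False by (simp add: divide_le_eq_1)
qed

lemma bounded_avg: assumes "stoch M" shows "bounded (range (avg M))"
  unfolding bounded_iff using norm_entry_bound[OF avg_entry[OF assms]] by blast

lemma mpow_comm: "M ** mpow M n = mpow M n ** M"
  by (induction n) (simp_all add: matrix_mul_assoc)

lemma ab_aux: "(a::'a::ab_group_add) + b - c - a = b - c"
  by (simp add: algebra_simps)

lemma sum_mpow_mul: "(\<Sum>n<N. mpow M n) ** M + mat 1 = (\<Sum>n<Suc N. mpow M n)"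
proof (induction N)
  case 0 then show ?case by simp
next
  case (Suc N)
  have "(\<Sum>n<Suc N. mpow M n) ** M + mat 1 = ((\<Sum>n<N. mpow M n) ** M + mat 1) + mpow M N ** M"
    by (simp only: sum.lessThan_Suc mm_add_rdistrib add_ac)
  also have "\<dots> = (\<Sum>n<Suc N. mpow M n) + mpow M (Suc N)" by (simp only: Suc.IH mpow.simps)
  also have "\<dots> = (\<Sum>n<Suc (Suc N). mpow M n)" by (simp only: sum.lessThan_Suc)
  finally show ?case .
qed

lemma avg_diff: "avg M N ** M - avg M N = (1 / real N) *\<^sub>R (mpow M N - mat 1)"
proof -
  let ?S = "(\<Sum>n<N. mpow M n)"
  have e: "?S ** M + mat 1 = ?S + mpow M N"
    using sum_mpow_mul[where N=N and M=M] by (simp only: sum.lessThan_Suc)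
  have e': "?S ** M = ?S + mpow M N - mat 1" by (simp only: eq_diff_eq e)
  have h: "?S ** M - ?S = mpow M N - mat 1"
    by (simp only: e' ab_aux)
  have "avg M N ** M - avg M N = (1 / real N) *\<^sub>R (?S ** M - ?S)"
    by (simp only: avg_def mm_scaleR_left scaleR_diff_right)
  then show ?thesis by (simp only: h)
qed

lemma avg_diff': "M ** avg M N - avg M N = (1 / real N) *\<^sub>R (mpow M N - mat 1)"
proof -
  have "M ** avg M N = avg M N ** M"
    unfolding avg_def mm_scaleR_left mm_scaleR_right mm_sum_left mm_sum_right mpow_comm ..
  then show ?thesis by (simp only: avg_diff)
qed

lemma diff_to0: fixes M :: "real^'n::finite^'n" assumes "stoch M"
  shows "(\<lambda>N. (1 / real N) *\<^sub>R (mpow M N - mat 1)) \<longlonglongrightarrow> 0"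
proof -
  define C where "C = real CARD('n) * real CARD('n) * 2"
  have b: "norm (mpow M N - mat 1) \<le> C" for N
  proof -
    have "\<bar>(mpow M N - mat 1)$i$j\<bar> \<le> 2" for i j
      using stoch_entry[OF stoch_mpow[OF assms], of N i j]
      by (auto simp: mat_def)
    then have "\<bar>((1/2) *\<^sub>R (mpow M N - mat 1))$i$j\<bar> \<le> 1" for i j by simp
    from norm_entry_bound[OF this] show ?thesis by (simp add: C_def)
  qed
  show ?thesis
  proof (rule Lim_null_comparison)
    show "\<forall>\<^sub>F N in sequentially. norm ((1 / real N) *\<^sub>R (mpow M N - mat 1)) \<le> C * (1 / real N)"
      using b by (auto intro!: always_eventually divide_right_mono)
    show "(\<lambda>N. C * (1 / real N)) \<longlonglongrightarrow> 0"
      using tendsto_mult_right_zero[OF lim_inverse_n', of C] by simp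
  qed
qed

lemma tendsto_mm_left:
  assumes "(f \<longlongrightarrow> L) F" shows "((\<lambda>x. f x ** (B::real^'n::finite^'n)) \<longlongrightarrow> L ** B) F"
  by (rule vec_tendstoI, rule vec_tendstoI) (auto simp: mm_nth intro!: tendsto_intros assms)

lemma tendsto_mm_right:
  assumes "(f \<longlongrightarrow> L) F" shows "((\<lambda>x. (B::real^'n::finite^'n) ** f x) \<longlongrightarrow> B ** L) F"
  by (rule vec_tendstoI, rule vec_tendstoI) (auto simp: mm_nth intro!: tendsto_intros assms)

lemma limpt_fix:
  assumes "stoch M" "strict_mono r" "(\<lambda>N. avg M (r N)) \<longlonglongrightarrow> L"
  shows "L ** M = L" "M ** L = L"
proof -
  have z: "(\<lambda>N. (1 / real (r N)) *\<^sub>R (mpow M (r N) - mat 1)) \<longlonglongrightarrow> 0"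
    using LIMSEQ_subseq_LIMSEQ[OF diff_to0[OF assms(1)] assms(2)] by (simp add: o_def)
  have "(\<lambda>N. avg M (r N) ** M - avg M (r N)) \<longlonglongrightarrow> L ** M - L"
    by (intro tendsto_intros tendsto_mm_left assms(3))
  moreover have "(\<lambda>N. avg M (r N) ** M - avg M (r N)) \<longlonglongrightarrow> 0"
    using z by (simp add: avg_diff)
  ultimately have "L ** M - L = 0" using LIMSEQ_unique by blast
  then show "L ** M = L" by simp
  have "(\<lambda>N. M ** avg M (r N) - avg M (r N)) \<longlonglongrightarrow> M ** L - L"
    by (intro tendsto_intros tendsto_mm_right assms(3))
  moreover have "(\<lambda>N. M ** avg M (r N) - avg M (r N)) \<longlonglongrightarrow> 0"
    using z by (simp add: avg_diff')
  ultimately have "M ** L - L = 0" using LIMSEQ_unique by blast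
  then show "M ** L = L" by simp
qed

lemma avg_fix:
  assumes "L ** M = L" "M ** L = L" "N > 0"
  shows "avg M N ** L = L" "L ** avg M N = L"
proof -
  have a: "mpow M n ** L = L" for n
    by (induction n) (simp_all add: matrix_mul_assoc[symmetric] assms(2))
  have b: "L ** mpow M n = L" for n
    by (induction n) (simp_all add: matrix_mul_assoc assms(1))
  show "avg M N ** L = L" using assms(3)
    by (simp add: avg_def mm_scaleR_left mm_sum_left a sum_constant_scaleR del: sum_constant)
  show "L ** avg M N = L" using assms(3)
    by (simp add: avg_def mm_scaleR_right mm_sum_right b sum_constant_scaleR del: sum_constant)
qed

lemma limpt_unique:
  assumes "stoch M" "strict_mono r1" "(\<lambda>N. avg M (r1 N)) \<longlonglongrightarrow> L1"
    "strict_mono r2" "(\<lambda>N. avg M (r2 N)) \<longlonglongrightarrow> L2"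
  shows "L1 = L2"
proof -
  note f1 = limpt_fix[OF assms(1-3)] and f2 = limpt_fix[OF assms(1,4,5)]
  have ev1: "\<forall>\<^sub>F N in sequentially. r1 N > 0"
    by (rule eventually_sequentiallyI[of 1], rule less_le_trans[OF _ seq_suble[OF assms(2)]], simp)
  have ev2: "\<forall>\<^sub>F N in sequentially. r2 N > 0"
    by (rule eventually_sequentiallyI[of 1], rule less_le_trans[OF _ seq_suble[OF assms(4)]], simp)
  have "(\<lambda>N. avg M (r1 N) ** L2) \<longlonglongrightarrow> L1 ** L2" by (intro tendsto_mm_left assms(3))
  moreover have "(\<lambda>N. avg M (r1 N) ** L2) \<longlonglongrightarrow> L2"
    by (rule tendsto_eventually) (use ev1 in \<open>rule eventually_mono, simp add: avg_fix[OF f2]\<close>)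
  ultimately have e1: "L1 ** L2 = L2" using LIMSEQ_unique by blast
  have "(\<lambda>N. L1 ** avg M (r2 N)) \<longlonglongrightarrow> L1 ** L2" by (intro tendsto_mm_right assms(5))
  moreover have "(\<lambda>N. L1 ** avg M (r2 N)) \<longlonglongrightarrow> L1"
    by (rule tendsto_eventually) (use ev2 in \<open>rule eventually_mono, simp add: avg_fix[OF f1]\<close>)
  ultimately have "L1 ** L2 = L1" using LIMSEQ_unique by blast
  with e1 show ?thesis by simp
qed

lemma avg_converges:
  assumes "stoch M"
  shows "\<exists>L. avg M \<longlonglongrightarrow> L \<and> L ** M = L"
proof -
  obtain L r where r: "strict_mono r" "(avg M \<circ> r) \<longlonglongrightarrow> L"
    using bounded_imp_convergent_subsequence[OF bounded_avg[OF assms]] by blast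
  have fx: "L ** M = L" using limpt_fix[OF assms r(1)] r(2) by (simp add: o_def)
  have "avg M \<longlonglongrightarrow> L"
  proof (rule ccontr)
    assume "\<not> avg M \<longlonglongrightarrow> L"
    then obtain e where e: "e > 0" "\<not> (\<forall>\<^sub>F N in sequentially. dist (avg M N) L < e)"
      unfolding tendsto_iff by blast
    then have "\<exists>\<^sub>F N in sequentially. dist (avg M N) L \<ge> e"
      by (simp add: not_eventually not_less)
    then have "infinite {N. dist (avg M N) L \<ge> e}"
      unfolding cofinite_eq_sequentially[symmetric] INFM_iff_infinite .
    from infinite_enumerate[OF this] obtain s :: "nat \<Rightarrow> nat"
      where s: "strict_mono s" "\<And>N. dist (avg M (s N)) L \<ge> e"
      by auto
    have "bounded (range (avg M \<circ> s))"
      using bounded_avg[OF assms] by (rule bounded_subset) auto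
    then obtain L2 t where t: "strict_mono t" "((avg M \<circ> s) \<circ> t) \<longlonglongrightarrow> L2"
      using bounded_imp_convergent_subsequence by blast
    have st: "strict_mono (s \<circ> t)" using s(1) t(1) by (rule strict_mono_o)
    have "L = L2"
      by (rule limpt_unique[OF assms r(1) _ st]) (use r(2) t(2) in \<open>simp_all add: o_def\<close>)
    then have "(\<lambda>N. avg M (s (t N))) \<longlonglongrightarrow> L"
      using t(2) by (simp add: o_def)
    then have "(\<lambda>N. dist (avg M (s (t N))) L) \<longlonglongrightarrow> 0"
      by (rule tendsto_dist_iff[THEN iffD1])
    then have "\<forall>\<^sub>F N in sequentially. dist (avg M (s (t N))) L < e"
      using e(1) by (rule order_tendstoD(2))
    then obtain N0 where "dist (avg M (s (t N0))) L < e" by (auto simp: eventually_sequentially)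
    with s(2)[of "t N0"] show False by simp
  qed
  with fx show ?thesis by blast
qed

lemma UNIV_outcome: "(UNIV :: outcome set) = {CC, CD, DC, DD}"
  using outcome.exhaust by blast

instance outcome :: finite
  by standard (simp add: UNIV_outcome)

lemma outcomes_UNIV: "outcomes = UNIV"
  by (simp add: outcomes_def UNIV_outcome)

lemma sum_outcome: "(\<Sum>k\<in>UNIV. f k) = f CC + f CD + f DC + (f DD :: real)"
  by (simp add: UNIV_outcome)

definition TT :: "(outcome \<Rightarrow> real) \<Rightarrow> (outcome \<Rightarrow> real) \<Rightarrow> outcome \<Rightarrow> outcome \<Rightarrow> real" where
  "TT p p' k' k = choice_prob (p k') (xc k) * choice_prob (p' (swap k')) (yc k)"

definition Tm :: "(outcome \<Rightarrow> real) \<Rightarrow> (outcome \<Rightarrow> real) \<Rightarrow> real^outcome^outcome" where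
  "Tm p p' = (\<chi> i j. TT p p' i j)"

definition w0 :: "bool \<Rightarrow> bool \<Rightarrow> real^outcome" where
  "w0 x0 y0 = (\<chi> k. choice_prob (if x0 then 1 else 0) (xc k) * choice_prob (if y0 then 1 else 0) (yc k))"

lemma RD0: "round_dist p x0 (mem1_pattern p' y0) 0 k = w0 x0 y0 $ k"
proof -
  have "{h. set h \<subseteq> outcomes \<and> length h = Suc 0 \<and> hd h = k} = {[k]}"
    by (auto simp: outcomes_UNIV length_Suc_conv)
  then show ?thesis by (simp add: round_dist_def w0_def mem1_pattern_def)
qed

lemma RDS:
  "round_dist p x0 (mem1_pattern p' y0) (Suc n) k =
    (\<Sum>k'\<in>UNIV. round_dist p x0 (mem1_pattern p' y0) n k' * TT p p' k' k)"
proof -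
  let ?q = "mem1_pattern p' y0"
  define H where "H = {h::outcome list. set h \<subseteq> UNIV \<and> length h = Suc n}"
  have fH: "finite H" unfolding H_def by (rule finite_lists_length_eq) simp
  have img: "{h. set h \<subseteq> outcomes \<and> length h = Suc (Suc n) \<and> hd h = k} = (\<lambda>h. k # h) ` H"
    by (force simp: outcomes_UNIV H_def length_Suc_conv)
  have "round_dist p x0 ?q (Suc n) k = (\<Sum>h\<in>H. hist_prob p x0 ?q (k#h))"
    unfolding round_dist_def img by (subst sum.reindex) (auto simp: inj_on_def)
  also have "\<dots> = (\<Sum>h\<in>H. hist_prob p x0 ?q h * TT p p' (hd h) k)"
    by (rule sum.cong) (auto simp: H_def TT_def mem1_pattern_def)
  also have "\<dots> = (\<Sum>k'\<in>UNIV. \<Sum>h\<in>{x. x \<in> H \<and> hd x = k'}. hist_prob p x0 ?q h * TT p p' (hd h) k)"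
    by (rule sum.group[symmetric]) (auto simp: fH)
  also have "\<dots> = (\<Sum>k'\<in>UNIV. round_dist p x0 ?q n k' * TT p p' k' k)"
  proof (rule sum.cong)
    fix k' :: outcome
    have "{x. x \<in> H \<and> hd x = k'} = {h. set h \<subseteq> outcomes \<and> length h = Suc n \<and> hd h = k'}"
      by (auto simp: H_def outcomes_UNIV)
    then show "(\<Sum>h\<in>{x. x \<in> H \<and> hd x = k'}. hist_prob p x0 ?q h * TT p p' (hd h) k) =
        round_dist p x0 ?q n k' * TT p p' k' k"
      by (simp add: round_dist_def sum_distrib_right)
  qed simp
  finally show ?thesis .
qed

definition wv where "wv p x0 p' y0 n = (\<chi> k. round_dist p x0 (mem1_pattern p' y0) n k)"

lemma wv_pow: "wv p x0 p' y0 n = w0 x0 y0 v* mpow (Tm p p') n"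
proof (induction n)
  case 0 then show ?case by (simp add: wv_def vec_eq_iff RD0)
next
  case (Suc n)
  have "wv p x0 p' y0 (Suc n) = wv p x0 p' y0 n v* Tm p p'"
    by (simp add: wv_def vec_eq_iff RDS vector_matrix_mult_def Tm_def mult.commute)
  then show ?case using Suc by (simp add: vector_matrix_mul_assoc)
qed

lemma cesaro_avg:
  "cesaro p x0 (mem1_pattern p' y0) N k = (w0 x0 y0 v* avg (Tm p p') N) $ k"
proof -
  have "cesaro p x0 (mem1_pattern p' y0) N k = (\<Sum>n<N. (w0 x0 y0 v* mpow (Tm p p') n) $ k) / real N"
    unfolding cesaro_def using wv_pow[of p x0 p' y0] by (simp add: wv_def vec_eq_iff)
  also have "\<dots> = (\<Sum>n<N. \<Sum>i\<in>UNIV. mpow (Tm p p') n $ i $ k * w0 x0 y0 $ i / real N)"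
    by (simp add: vector_matrix_mult_def sum_divide_distrib mult.commute)
  also have "\<dots> = (\<Sum>i\<in>UNIV. \<Sum>n<N. mpow (Tm p p') n $ i $ k * w0 x0 y0 $ i / real N)"
    by (rule sum.swap)
  also have "\<dots> = (\<Sum>i\<in>UNIV. w0 x0 y0 $ i * (\<Sum>n<N. mpow (Tm p p') n $ i $ k / real N))"
    by (rule sum.cong[OF refl], simp add: sum_distrib_left, rule sum.cong[OF refl], simp)
  also have "\<dots> = (w0 x0 y0 v* avg (Tm p p') N) $ k"
    by (simp add: avg_def vector_matrix_mult_def sum_divide_distrib mult.commute)
  finally show ?thesis .
qed

lemma cp_bounds: "0 \<le> a \<Longrightarrow> a \<le> 1 \<Longrightarrow> 0 \<le> choice_prob a b \<and> choice_prob a b \<le> 1"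
  by (simp add: choice_prob_def)

lemma stoch_Tm: assumes "memory_one p" "memory_one p'" shows "stoch (Tm p p')"
  unfolding stoch_def
proof (intro conjI allI)
  fix i j show "0 \<le> Tm p p' $ i $ j"
    using assms cp_bounds by (simp add: Tm_def TT_def memory_one_def)
next
  fix i show "(\<Sum>j\<in>UNIV. Tm p p' $ i $ j) = 1"
    by (simp add: Tm_def TT_def sum_outcome choice_prob_def algebra_simps)
qed

lemma stoch_avg: assumes "stoch M" "N > 0" shows "stoch (avg M N)"
  unfolding stoch_def
proof (intro conjI allI)
  fix i j show "0 \<le> avg M N $ i $ j"
    using stoch_entry[OF stoch_mpow[OF assms(1)]] by (auto simp: avg_def intro!: sum_nonneg divide_nonneg_nonneg)
next
  fix i
  have "(\<Sum>j\<in>UNIV. avg M N $ i $ j) = (\<Sum>j\<in>UNIV. \<Sum>n<N. mpow M n $ i $ j / real N)"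
    by (simp add: avg_def sum_divide_distrib)
  also have "\<dots> = (\<Sum>n<N. \<Sum>j\<in>UNIV. mpow M n $ i $ j / real N)"
    by (rule sum.swap)
  also have "\<dots> = (\<Sum>n<N. \<Sum>j\<in>UNIV. mpow M n $ i $ j) / real N"
    by (simp add: sum_divide_distrib)
  also have "\<dots> = 1" using stoch_mpow[OF assms(1)] assms(2) by (simp add: stoch_def)
  finally show "(\<Sum>j\<in>UNIV. avg M N $ i $ j) = 1" .
qed

lemma stoch_lim: assumes "stoch M" "avg M \<longlonglongrightarrow> L" shows "stoch (L :: real^'n::finite^'n)"
  unfolding stoch_def
proof (intro conjI allI)
  fix i j
  have t: "(\<lambda>N. avg M N $ i $ j) \<longlonglongrightarrow> L $ i $ j"
    by (intro tendsto_vec_nth assms(2))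
  show "0 \<le> L $ i $ j"
    by (rule LIMSEQ_le_const[OF t]) (use stoch_avg[OF assms(1)] in \<open>auto simp: stoch_def intro!: exI[of _ 1]\<close>)
next
  fix i
  have t: "(\<lambda>N. \<Sum>j\<in>UNIV. avg M N $ i $ j) \<longlonglongrightarrow> (\<Sum>j\<in>UNIV. L $ i $ j)"
    by (intro tendsto_sum tendsto_vec_nth assms(2))
  have "(\<lambda>N. \<Sum>j\<in>UNIV. avg M N $ i $ j) \<longlonglongrightarrow> 1"
    by (rule tendsto_eventually, rule eventually_sequentiallyI[of 1])
       (use stoch_avg[OF assms(1)] in \<open>auto simp: stoch_def\<close>)
  with t show "(\<Sum>j\<in>UNIV. L $ i $ j) = 1" using LIMSEQ_unique by blast
qed

lemma swap_swap[simp]: "swap (swap k) = k" by (cases k) auto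
lemma xc_swap[simp]: "xc (swap k) = yc k" by (cases k) auto
lemma yc_swap[simp]: "yc (swap k) = xc k" by (cases k) auto

lemma RD_sym: "round_dist p x0 (mem1_pattern p' y0) n k = round_dist p' y0 (mem1_pattern p x0) n (swap k)"
proof (induction n arbitrary: k)
  case 0 then show ?case by (simp add: RD0 w0_def)
next
  case (Suc n)
  show ?case
    unfolding RDS Suc sum_outcome by (simp add: TT_def)
qed

lemma RD_self: assumes "firm p" shows "round_dist p False (mem1_pattern p False) n k = (if k = DD then 1 else 0)"
proof (induction n arbitrary: k)
  case 0 then show ?case by (cases k) (simp_all add: RD0 w0_def choice_prob_def)
next
  case (Suc n)
  then show ?case using assms
    by (cases k) (simp_all add: RDS sum_outcome TT_def choice_prob_def firm_def)
qed

theorem theorem5p4: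
  fixes R P :: real
    and I :: "'i set"
    and strat :: "'i \<Rightarrow> (outcome \<Rightarrow> real) \<times> bool"
    and istar :: 'i
  assumes "0 < P" and "P < R" and "R < 1" and "2 * R > 1"
    and "finite I"
    and "\<forall>i\<in>I. memory_one (fst (strat i))"
    and "istar \<in> I"
    and "strictly_firm R P (fst (strat istar))"
    and "snd (strat istar) = False"
    and "\<forall>j\<in>I. j \<noteq> istar \<longrightarrow> \<not> firm (fst (strat j))"
  shows "ESS I (\<lambda>i j. payoffA R P (strat i) (strat j)) istar"
proof -
  define ps where "ps = fst (strat istar)"
  have sI: "strat istar = (ps, False)" using assms(9) by (simp add: ps_def prod_eq_iff)
  have fps: "firm ps" using assms(8) by (simp add: ps_def strictly_firm_def)
  have mps: "memory_one ps" using assms(6,7) by (simp add: ps_def)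
  have self: "payoffA R P (strat istar) (strat istar) = P"
  proof -
    have "(\<lambda>N. dot (cesaro ps False (mem1_pattern ps False) N) (SX R P)) \<longlonglongrightarrow> P"
    proof (rule tendsto_eventually, rule eventually_sequentiallyI[of 1])
      fix N :: nat assume "1 \<le> N"
      then show "dot (cesaro ps False (mem1_pattern ps False) N) (SX R P) = P"
        by (simp add: dot_def outcomes_def cesaro_def RD_self[OF fps])
    qed
    then show ?thesis unfolding payoffA_def sI by (simp add: limI)
  qed
  show ?thesis unfolding ESS_def
  proof (intro ballI impI)
    fix j assume j: "j \<in> I" "j \<noteq> istar"
    obtain pj xj where sj: "strat j = (pj, xj)" by fastforce
    have mpj: "memory_one pj" using assms(6) j sj by (metis fst_conv)
    have nf: "\<not> firm pj" using assms(10) j sj by (metis fst_conv)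
    let ?q = "mem1_pattern pj xj"
    let ?M = "Tm ps pj"
    have st: "stoch ?M" by (rule stoch_Tm[OF mps mpj])
    obtain L where L: "avg ?M \<longlonglongrightarrow> L" "L ** ?M = L" using avg_converges[OF st] by blast
    define v where "v k = (w0 False xj v* L) $ k" for k
    have cv: "(\<lambda>N. cesaro ps False ?q N k) \<longlonglongrightarrow> v k" for k
      unfolding cesaro_avg v_def vector_matrix_mult_def
      by (simp, intro tendsto_intros tendsto_vec_nth L(1))
    have ld: "limit_dist ps False ?q v"
      unfolding limit_dist_def using cv by (intro exI[of _ id]) (simp add: strict_mono_def)
    have pat: "pattern ?q" using mpj by (simp add: pattern_def mem1_pattern_def memory_one_def)
    have stL: "stoch L" by (rule stoch_lim[OF st L(1)])
    have vnn: "0 \<le> v k" for k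
      using stL by (simp add: v_def vector_matrix_mult_def stoch_def w0_def choice_prob_def sum_nonneg)
    have vsum: "v CC + v CD + v DC + v DD = 1"
    proof -
      have "(\<Sum>k\<in>UNIV. v k) = (\<Sum>k\<in>UNIV. \<Sum>i\<in>UNIV. L $ i $ k * w0 False xj $ i)"
        by (simp add: v_def vector_matrix_mult_def mult.commute)
      also have "\<dots> = (\<Sum>i\<in>UNIV. \<Sum>k\<in>UNIV. L $ i $ k * w0 False xj $ i)"
        by (rule sum.swap)
      also have "\<dots> = (\<Sum>i\<in>UNIV. w0 False xj $ i * (\<Sum>k\<in>UNIV. L $ i $ k))"
        by (simp add: sum_distrib_left mult.commute)
      also have "\<dots> = 1" using stL by (simp add: stoch_def sum_outcome w0_def choice_prob_def)
      finally show ?thesis by (simp add: sum_outcome)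
    qed
    have stat: "v DD = (\<Sum>i\<in>UNIV. TT ps pj i DD * v i)"
    proof -
      have "w0 False xj v* L v* ?M = w0 False xj v* L"
        by (simp add: vector_matrix_mul_assoc L(2))
      then have "(w0 False xj v* L v* ?M) $ DD = v DD" by (simp add: v_def)
      then show ?thesis by (simp add: vector_matrix_mult_def Tm_def v_def mult.commute)
    qed
    have "v DD \<noteq> 1"
    proof
      assume v1: "v DD = 1"
      then have "v CC = 0" "v CD = 0" "v DC = 0" using vsum vnn[of CC] vnn[of CD] vnn[of DC] by linarith+
      then have "1 = TT ps pj DD DD" using stat v1 by (simp add: sum_outcome)
      then have "pj DD = 0" using fps by (simp add: TT_def choice_prob_def firm_def)
      with nf show False by (simp add: firm_def)
    qed
    then have lt: "dot v (SY R P) < P"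
      using assms(8) pat ld unfolding strictly_firm_def ps_def by force
    have "(\<lambda>N. dot (cesaro pj xj (mem1_pattern ps False) N) (SX R P)) \<longlonglongrightarrow> dot v (SY R P)"
    proof -
      have e: "dot (cesaro pj xj (mem1_pattern ps False) N) (SX R P) =
          dot (cesaro ps False ?q N) (SY R P)" for N
        by (simp add: dot_def outcomes_def cesaro_def RD_sym[of pj xj ps False] add_divide_distrib[symmetric]
            algebra_simps)
      show ?thesis unfolding e by (unfold dot_def) (intro tendsto_intros cv)
    qed
    then have "payoffA R P (strat j) (strat istar) = dot v (SY R P)"
      unfolding payoffA_def sI sj by (simp add: limI)
    with lt self show "payoffA R P (strat j) (strat istar) < payoffA R P (strat istar) (strat istar)"
      by simp
  qed
qed

end
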